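(* Let $N\ge1$ be an integer. The normalizer of $\Gamma_0(N)$, viewed as a group of linear fractional transformations, acts transitively on $\mathbb Q$ if and only if $N=2^a3^bN'$ for some integers $0\le a<8$, $0\le b<4$ and a square-free integer $N'$ divisible neither by $2$ nor by $3$.
   Context: $\Gamma_0(N)$ is the subgroup of $\mathrm{SL}_2(\mathbb Z)$ of matrices whose bottom-left entry is divisible by $N$. Its normalizer is taken in the group of orientation-preserving linear fractional transformations $z\mapsto(az+b)/(cz+d)$ with $\begin{pmatrix}a&b\\c&d\end{pmatrix}\in\mathrm{GL}_2^+(\mathbb R)$, which act on $\mathbb R\cup\{\infty\}$. *)

theory Defs
  imports Complex_Main "HOL-Computational_Algebra.Squarefree"
begin

text \<open>2x2 real matrices (a,b,c,d) standing for [[a,b],[c,d]].\<close>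
type_synonym mat2 = "real \<times> real \<times> real \<times> real"

fun mmul2 :: "mat2 \<Rightarrow> mat2 \<Rightarrow> mat2" where
  "mmul2 (a,b,c,d) (e,f,g,h) = (a*e + b*g, a*f + b*h, c*e + d*g, c*f + d*h)"

fun det2 :: "mat2 \<Rightarrow> real" where
  "det2 (a,b,c,d) = a*d - b*c"

fun minv2 :: "mat2 \<Rightarrow> mat2" where
  "minv2 (a,b,c,d) = (d / (a*d-b*c), -b / (a*d-b*c), -c / (a*d-b*c), a / (a*d-b*c))"

definition Gamma0 :: "nat \<Rightarrow> mat2 set" where
  "Gamma0 N = {(of_int a, of_int b, of_int c, of_int d) | a b c d :: int.
                 a*d - b*c = 1 \<and> int N dvd c}"

text \<open>Conjugation by M as a linear fractional
  transformation equals conjugation of matrices; since conjugates have determinant 1 and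
  -1 is in Gamma_0(N), equality of the projective images is equality of matrix sets.\<close>
definition normalizer_Gamma0 :: "nat \<Rightarrow> mat2 set" where
  "normalizer_Gamma0 N = {M. det2 M > 0 \<and>
      (\<lambda>g. mmul2 (mmul2 M g) (minv2 M)) ` Gamma0 N = Gamma0 N}"

fun lft_defined :: "mat2 \<Rightarrow> real \<Rightarrow> bool" where
  "lft_defined (a,b,c,d) x = (c*x + d \<noteq> 0)"

fun lft :: "mat2 \<Rightarrow> real \<Rightarrow> real" where
  "lft (a,b,c,d) x = (a*x + b) / (c*x + d)"

end

theory Submission
  imports Defs
begin


definition conj2 :: "mat2 \<Rightarrow> mat2 \<Rightarrow> mat2" where
  "conj2 M g = mmul2 (mmul2 M g) (minv2 M)"

lemma conj2_explicit:
  "conj2 (A,B,C,D) (x,y,z,w) =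
    ((A*D*x + B*D*z - A*C*y - B*C*w)/(A*D-B*C), (-A*B*x - B*B*z + A*A*y + A*B*w)/(A*D-B*C),
     (C*D*x + D*D*z - C*C*y - C*D*w)/(A*D-B*C), (-B*C*x - B*D*z + A*C*y + A*D*w)/(A*D-B*C))"
  unfolding conj2_def by (simp add: field_simps add_divide_distrib diff_divide_distrib)


lemma det2_mmul2: "det2 (mmul2 A B) = det2 A * det2 B"
  by (cases A; cases B) (simp add: algebra_simps)

lemma mmul2_assoc: "mmul2 (mmul2 A B) C = mmul2 A (mmul2 B C)"
  by (cases A; cases B; cases C) (simp add: algebra_simps)

fun adj2 :: "mat2 \<Rightarrow> mat2" where "adj2 (a,b,c,d) = (d,-b,-c,a)"
fun smul2 :: "real \<Rightarrow> mat2 \<Rightarrow> mat2" where "smul2 s (a,b,c,d) = (s*a,s*b,s*c,s*d)"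

lemma minv2_adj: "minv2 A = smul2 (1/det2 A) (adj2 A)"
  by (cases A) simp

lemma mmul2_smul_l: "mmul2 (smul2 s A) B = smul2 s (mmul2 A B)"
  by (cases A; cases B) (simp add: algebra_simps)
lemma mmul2_smul_r: "mmul2 A (smul2 s B) = smul2 s (mmul2 A B)"
  by (cases A; cases B) (simp add: algebra_simps)
lemma smul2_smul2: "smul2 s (smul2 t A) = smul2 (s*t) A"
  by (cases A) (simp add: algebra_simps)
lemma smul2_1: "smul2 1 A = A"
  by (cases A) simp
lemma adj2_mmul2: "adj2 (mmul2 A B) = mmul2 (adj2 B) (adj2 A)"
  by (cases A; cases B) (simp add: algebra_simps)
lemma mmul2_adj2: "mmul2 A (adj2 A) = smul2 (det2 A) (1,0,0,1)"
  by (cases A) (simp add: algebra_simps)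
lemma mmul2_adj2': "mmul2 (adj2 A) A = smul2 (det2 A) (1,0,0,1)"
  by (cases A) (simp add: algebra_simps)
lemma mmul2_id_l: "mmul2 (1,0,0,1) A = A"
  by (cases A) simp
lemma mmul2_id_r: "mmul2 A (1,0,0,1) = A"
  by (cases A) simp
lemma det2_adj2: "det2 (adj2 A) = det2 A"
  by (cases A) (simp add: algebra_simps)
lemma det2_smul2: "det2 (smul2 s A) = s^2 * det2 A"
  by (cases A) (simp add: algebra_simps power2_eq_square)

lemma det2_minv2: "det2 (minv2 A) = 1 / det2 A"
  unfolding minv2_adj det2_smul2 det2_adj2 by (simp add: power2_eq_square)

lemma minv2_mmul2: assumes "det2 A \<noteq> 0" "det2 B \<noteq> 0"
  shows "minv2 (mmul2 A B) = mmul2 (minv2 B) (minv2 A)"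
  unfolding minv2_adj det2_mmul2 adj2_mmul2 mmul2_smul_l mmul2_smul_r smul2_smul2
  by (simp add: mult.commute)

lemma mmul2_minv2: assumes "det2 A \<noteq> 0" shows "mmul2 A (minv2 A) = (1,0,0,1)"
  unfolding minv2_adj mmul2_smul_r mmul2_adj2 smul2_smul2 using assms by (simp add: smul2_1)
lemma mmul2_minv2': assumes "det2 A \<noteq> 0" shows "mmul2 (minv2 A) A = (1,0,0,1)"
  unfolding minv2_adj mmul2_smul_l mmul2_adj2' smul2_smul2 using assms by (simp add: smul2_1)

lemma conj2_mult:
  assumes "det2 A \<noteq> 0" "det2 B \<noteq> 0"
  shows "conj2 (mmul2 A B) g = conj2 A (conj2 B g)"
  unfolding conj2_def minv2_mmul2[OF assms] by (simp add: mmul2_assoc)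

lemma conj2_inv1:
  assumes "det2 A \<noteq> 0"
  shows "conj2 (minv2 A) (conj2 A g) = g"
proof -
  have "det2 (minv2 A) \<noteq> 0" using assms by (simp add: det2_minv2)
  then have "conj2 (minv2 A) (conj2 A g) = conj2 (mmul2 (minv2 A) A) g"
    using conj2_mult assms by simp
  also have "\<dots> = g" unfolding mmul2_minv2'[OF assms] conj2_def
    by (cases g) simp
  finally show ?thesis .
qed

lemma conj2_inv2:
  assumes "det2 A \<noteq> 0"
  shows "conj2 A (conj2 (minv2 A) g) = g"
proof -
  have "det2 (minv2 A) \<noteq> 0" using assms by (simp add: det2_minv2)
  then have "conj2 A (conj2 (minv2 A) g) = conj2 (mmul2 A (minv2 A)) g"
    using conj2_mult assms by simp
  also have "\<dots> = g" unfolding mmul2_minv2[OF assms] conj2_def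
    by (cases g) simp
  finally show ?thesis .
qed

lemma det2_conj2: assumes "det2 A \<noteq> 0" shows "det2 (conj2 A g) = det2 g"
  unfolding conj2_def det2_mmul2 det2_minv2 using assms by simp

lemma conj2_scalar: assumes "s \<noteq> 0" shows "conj2 (s,0,0,s) g = g"
  using assms by (cases g) (simp add: conj2_def power2_eq_square)

lemma conj2_smul: assumes "s \<noteq> 0" "det2 A \<noteq> 0" shows "conj2 (smul2 s A) g = conj2 A g"
proof -
  have "smul2 s A = mmul2 (s,0,0,s) A" by (cases A) simp
  moreover have "det2 (s,0,0,s) \<noteq> 0" using assms by simp
  ultimately show ?thesis using conj2_mult[of "(s,0,0,s)" A g] assms conj2_scalar by simp
qed


lemma normalizer_alt: "normalizer_Gamma0 N = {M. det2 M > 0 \<and> conj2 M ` Gamma0 N = Gamma0 N}"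
  unfolding normalizer_Gamma0_def conj2_def by simp

lemma normalizer_mult:
  assumes "A \<in> normalizer_Gamma0 N" "B \<in> normalizer_Gamma0 N"
  shows "mmul2 A B \<in> normalizer_Gamma0 N"
proof -
  have dA: "det2 A > 0" and iA: "conj2 A ` Gamma0 N = Gamma0 N"
    and dB: "det2 B > 0" and iB: "conj2 B ` Gamma0 N = Gamma0 N"
    using assms unfolding normalizer_alt by auto
  have "conj2 (mmul2 A B) = conj2 A \<circ> conj2 B"
  proof (rule ext)
    fix g show "conj2 (mmul2 A B) g = (conj2 A \<circ> conj2 B) g"
      using conj2_mult[of A B g] dA dB by simp
  qed
  then have "conj2 (mmul2 A B) ` Gamma0 N = Gamma0 N"
    by (metis iA iB image_comp)
  moreover have "det2 (mmul2 A B) > 0" using dA dB by (simp add: det2_mmul2)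
  ultimately show ?thesis unfolding normalizer_alt by simp
qed

lemma normalizer_inv:
  assumes "A \<in> normalizer_Gamma0 N"
  shows "minv2 A \<in> normalizer_Gamma0 N"
proof -
  have dA: "det2 A > 0" and iA: "conj2 A ` Gamma0 N = Gamma0 N"
    using assms unfolding normalizer_alt by auto
  have "conj2 (minv2 A) ` Gamma0 N = conj2 (minv2 A) ` (conj2 A ` Gamma0 N)" using iA by simp
  also have "\<dots> = Gamma0 N" using conj2_inv1[of A] dA by (simp add: image_comp o_def)
  finally show ?thesis unfolding normalizer_alt using dA by (simp add: det2_minv2)
qed

lemma normalizer_intro:
  assumes "det2 M > 0"
    and "\<And>g. g \<in> Gamma0 N \<Longrightarrow> conj2 M g \<in> Gamma0 N"
    and "\<And>g. g \<in> Gamma0 N \<Longrightarrow> conj2 (minv2 M) g \<in> Gamma0 N"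
  shows "M \<in> normalizer_Gamma0 N"
proof -
  have "conj2 M ` Gamma0 N = Gamma0 N"
  proof
    show "conj2 M ` Gamma0 N \<subseteq> Gamma0 N" using assms(2) by auto
    show "Gamma0 N \<subseteq> conj2 M ` Gamma0 N"
    proof
      fix g assume "g \<in> Gamma0 N"
      then have "conj2 M (conj2 (minv2 M) g) = g" "conj2 (minv2 M) g \<in> Gamma0 N"
        using conj2_inv2 assms by auto
      then show "g \<in> conj2 M ` Gamma0 N" by (metis image_eqI)
    qed
  qed
  then show ?thesis unfolding normalizer_alt using assms(1) by simp
qed

lemma lft_mmul2:
  assumes "lft_defined B x" "lft_defined A (lft B x)"
  shows "lft_defined (mmul2 A B) x \<and> lft (mmul2 A B) x = lft A (lft B x)"
proof -
  obtain a b c d where A: "A = (a,b,c,d)" by (cases A)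
  obtain e f g h where B: "B = (e,f,g,h)" by (cases B)
  have h1: "g*x+h \<noteq> 0" using assms(1) B by simp
  have h2: "c*((e*x+f)/(g*x+h)) + d \<noteq> 0" using assms(2) A B by simp
  have eq1: "c*((e*x+f)/(g*x+h)) + d = ((c*e+d*g)*x + (c*f+d*h))/(g*x+h)"
    using h1 by (simp add: field_simps)
  have eq2: "a*((e*x+f)/(g*x+h)) + b = ((a*e+b*g)*x + (a*f+b*h))/(g*x+h)"
    using h1 by (simp add: field_simps)
  have nz: "(c*e+d*g)*x + (c*f+d*h) \<noteq> 0" using h2 eq1 by simp
  have "lft A (lft B x) = (((a*e+b*g)*x + (a*f+b*h))/(g*x+h)) / (((c*e+d*g)*x + (c*f+d*h))/(g*x+h))"
    unfolding A B lft.simps eq1 eq2 by simp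
  also have "\<dots> = ((a*e+b*g)*x + (a*f+b*h)) / ((c*e+d*g)*x + (c*f+d*h))"
    using h1 by simp
  finally show ?thesis using nz unfolding A B by simp
qed

lemma frac_aux: fixes D Q :: real assumes "D \<noteq> 0" "Q \<noteq> 0"
  shows "u/D * (P/Q) + v/D = (u*P + v*Q)/(D*Q)"
  using assms by (simp add: field_simps)

lemma lft_minv2:
  assumes "det2 A \<noteq> 0" "lft_defined A x"
  shows "lft_defined (minv2 A) (lft A x) \<and> lft (minv2 A) (lft A x) = x"
proof -
  obtain a b c d where A: "A = (a,b,c,d)" by (cases A)
  have D: "a*d-b*c \<noteq> 0" and h: "c*x+d \<noteq> 0" using assms A by auto
  have n1: "-c*(a*x+b) + a*(c*x+d) = a*d-b*c" by (simp add: algebra_simps)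
  have n2: "d*(a*x+b) - b*(c*x+d) = (a*d-b*c)*x" by (simp add: algebra_simps)
  have e1: "-c/(a*d-b*c) * ((a*x+b)/(c*x+d)) + a/(a*d-b*c) = (-c*(a*x+b) + a*(c*x+d))/((a*d-b*c)*(c*x+d))"
    using frac_aux[OF D h, of "-c" "a*x+b" a] by simp
  also have "\<dots> = 1/(c*x+d)" using D h by (simp only: n1) simp
  finally have e1: "-c/(a*d-b*c) * ((a*x+b)/(c*x+d)) + a/(a*d-b*c) = 1/(c*x+d)" .
  have e2: "d/(a*d-b*c) * ((a*x+b)/(c*x+d)) + -b/(a*d-b*c) = (d*(a*x+b) - b*(c*x+d))/((a*d-b*c)*(c*x+d))"
    using frac_aux[OF D h, of "d" "a*x+b" "-b"] by simp
  also have "\<dots> = x/(c*x+d)" using D h by (simp only: n2) simp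
  finally have e2: "d/(a*d-b*c) * ((a*x+b)/(c*x+d)) + -b/(a*d-b*c) = x/(c*x+d)" .
  show ?thesis unfolding A minv2.simps lft.simps lft_defined.simps e1 e2 using h by simp
qed


lemma div_of_int_aux: "(num::int) = den * q \<Longrightarrow> den \<noteq> 0 \<Longrightarrow> (of_int num :: real) / of_int den = of_int q"
  by simp

lemma conj2_int:
  fixes A B C D x y z w x' y' z' w' \<Delta> :: int
  assumes "A*D - B*C = \<Delta>" "\<Delta> \<noteq> 0"
    "A*D*x + B*D*z - A*C*y - B*C*w = \<Delta>*x'"
    "-A*B*x - B*B*z + A*A*y + A*B*w = \<Delta>*y'"
    "C*D*x + D*D*z - C*C*y - C*D*w = \<Delta>*z'"
    "-B*C*x - B*D*z + A*C*y + A*D*w = \<Delta>*w'"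
  shows "conj2 (of_int A, of_int B, of_int C, of_int D) (of_int x, of_int y, of_int z, of_int w)
         = (of_int x', of_int y', of_int z', of_int w')"
proof -
  note e = div_of_int_aux[OF assms(3) assms(2)] div_of_int_aux[OF assms(4) assms(2)]
           div_of_int_aux[OF assms(5) assms(2)] div_of_int_aux[OF assms(6) assms(2)]
  show ?thesis unfolding conj2_explicit using e unfolding assms(1)[symmetric] by simp
qed



definition Pmod :: "int \<Rightarrow> bool" where
  "Pmod h \<longleftrightarrow> (\<forall>x w. h dvd x*w - 1 \<longrightarrow> h dvd x - w)"

lemma form_conj_Gamma0:
  fixes h e f \<alpha> \<beta> \<gamma> \<delta> :: int and N :: nat
  assumes NN: "int N = h^2 * e * f" and hpos: "h > 0" and epos: "e > 0"
    and det: "e*\<alpha>*\<delta> - f*\<beta>*\<gamma> = 1" and P: "Pmod h" and g: "g \<in> Gamma0 N"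
  shows "conj2 (of_int (h*e*\<alpha>), of_int \<beta>, of_int (int N*\<gamma>), of_int (h*e*\<delta>)) g \<in> Gamma0 N"
proof -
  obtain x y Z w :: int where gdef: "g = (of_int x, of_int y, of_int Z, of_int w)"
    and d1: "x*w - y*Z = 1" and dZ: "int N dvd Z"
    using g unfolding Gamma0_def by auto
  obtain z where Z: "Z = int N * z" using dZ by auto
  have "h dvd int N" using NN by (simp add: power2_eq_square)
  then have "h dvd x*w - 1" using d1 Z by (metis add_diff_cancel_left' diff_add_cancel dvd_mult2 mult.commute dvd_mult)
  then have "h dvd x - w" using P unfolding Pmod_def by blast
  then obtain q where q: "x = w + h*q" by (metis add_diff_cancel_left' diff_add_cancel dvd_def)
  define n where "n = int N"
  have n: "n = h^2*e*f" using NN n_def by simp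
  define x' where "x' = e*\<alpha>*\<delta>*x + h*e*f*\<beta>*\<delta>*z - h*e*f*\<alpha>*\<gamma>*y - f*\<beta>*\<gamma>*w"
  define y' where "y' = -\<alpha>*\<beta>*q - \<beta>*\<beta>*f*z + e*\<alpha>*\<alpha>*y"
  define z'' where "z'' = \<gamma>*\<delta>*q + e*\<delta>*\<delta>*z - f*\<gamma>*\<gamma>*y"
  define w' where "w' = -f*\<beta>*\<gamma>*x - h*e*f*\<beta>*\<delta>*z + h*e*f*\<alpha>*\<gamma>*y + e*\<alpha>*\<delta>*w"
  have D: "(h*e*\<alpha>)*(h*e*\<delta>) - \<beta>*(n*\<gamma>) = h^2*e"
  proof -
    have "(h*e*\<alpha>)*(h*e*\<delta>) - \<beta>*(n*\<gamma>) = h^2*e*(e*\<alpha>*\<delta> - f*\<beta>*\<gamma>)"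
      by (simp add: n algebra_simps power2_eq_square)
    then show ?thesis using det by simp
  qed
  have Dnz: "h^2*e \<noteq> 0" using hpos epos by simp
  have c: "conj2 (of_int (h*e*\<alpha>), of_int \<beta>, of_int (n*\<gamma>), of_int (h*e*\<delta>)) g
        = (of_int x', of_int y', of_int (n*z''), of_int w')"
    unfolding gdef
  proof (rule conj2_int[OF D Dnz])
    show "h * e * \<alpha> * (h * e * \<delta>) * x + \<beta> * (h * e * \<delta>) * Z - h * e * \<alpha> * (n * \<gamma>) * y -
    \<beta> * (n * \<gamma>) * w = h\<^sup>2 * e * x'"
      unfolding x'_def Z n_def[symmetric] n by (simp add: algebra_simps power2_eq_square)
    show "- (h * e * \<alpha>) * \<beta> * x - \<beta> * \<beta> * Z + h * e * \<alpha> * (h * e * \<alpha>) * y +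
    h * e * \<alpha> * \<beta> * w = h\<^sup>2 * e * y'"
      unfolding y'_def Z n_def[symmetric] n q by (simp add: algebra_simps power2_eq_square)
    show "n * \<gamma> * (h * e * \<delta>) * x + h * e * \<delta> * (h * e * \<delta>) * Z - n * \<gamma> * (n * \<gamma>) * y -
    n * \<gamma> * (h * e * \<delta>) * w = h\<^sup>2 * e * (n * z'')"
      unfolding z''_def Z n_def[symmetric] n q by (simp add: algebra_simps power2_eq_square)
    show "- \<beta> * (n * \<gamma>) * x - \<beta> * (h * e * \<delta>) * Z + h * e * \<alpha> * (n * \<gamma>) * y +
    h * e * \<alpha> * (h * e * \<delta>) * w = h\<^sup>2 * e * w'"
      unfolding w'_def Z n_def[symmetric] n by (simp add: algebra_simps power2_eq_square)
  qed
  have "det2 (of_int (h*e*\<alpha>), of_int \<beta>, of_int (n*\<gamma>), of_int (h*e*\<delta>)) = of_int (h^2*e)"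
    using D by (metis det2.simps of_int_diff of_int_mult)
  then have "det2 (conj2 (of_int (h*e*\<alpha>), of_int \<beta>, of_int (n*\<gamma>), of_int (h*e*\<delta>)) g) = det2 g"
    using det2_conj2 Dnz by (metis of_int_eq_0_iff)
  then have "det2 (of_int x', of_int y', of_int (n*z''), of_int w') = det2 g"
    by (simp only: c)
  then have "real_of_int (x'*w' - y'*(n*z'')) = of_int (x*w - y*Z)"
    by (simp add: gdef)
  then have "x'*w' - y'*(n*z'') = 1" using d1 by linarith
  then have "(real_of_int x', real_of_int y', real_of_int (n * z''), real_of_int w') \<in> Gamma0 N"
    unfolding Gamma0_def n_def by (intro CollectI exI[of _ x'] exI[of _ y'] exI[of _ "n*z''"] exI[of _ w']) (simp add: n_def)
  then show ?thesis unfolding n_def[symmetric] c .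
qed



lemma form_normalizer:
  fixes h e f \<alpha> \<beta> \<gamma> \<delta> :: int and N :: nat
  assumes NN: "int N = h^2 * e * f" and hpos: "h > 0" and epos: "e > 0"
    and det: "e*\<alpha>*\<delta> - f*\<beta>*\<gamma> = 1" and P: "Pmod h"
  shows "(of_int (h*e*\<alpha>), of_int \<beta>, of_int (int N*\<gamma>), of_int (h*e*\<delta>)) \<in> normalizer_Gamma0 N"
    (is "?M \<in> _")
proof -
  have D: "(h*e*\<alpha>)*(h*e*\<delta>) - \<beta>*(int N*\<gamma>) = h^2*e"
  proof -
    have "(h*e*\<alpha>)*(h*e*\<delta>) - \<beta>*(int N*\<gamma>) = h^2*e*(e*\<alpha>*\<delta> - f*\<beta>*\<gamma>)"
      by (simp add: NN algebra_simps power2_eq_square)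
    then show ?thesis using det by simp
  qed
  have dM: "det2 ?M = of_int (h^2*e)"
    using D by (metis det2.simps of_int_diff of_int_mult)
  have dpos: "det2 ?M > 0" unfolding dM using hpos epos by simp
  have adj: "adj2 ?M = (of_int (h*e*\<delta>), of_int (-\<beta>), of_int (int N*(-\<gamma>)), of_int (h*e*\<alpha>))"
    by simp
  have det': "e*\<delta>*\<alpha> - f*(-\<beta>)*(-\<gamma>) = 1" using det by (simp add: algebra_simps)
  show ?thesis
  proof (rule normalizer_intro[OF dpos])
    fix g assume g: "g \<in> Gamma0 N"
    show "conj2 ?M g \<in> Gamma0 N" by (rule form_conj_Gamma0[OF NN hpos epos det P g])
    have "det2 (adj2 ?M) \<noteq> 0" using dpos det2_adj2 by (metis less_irrefl)
    then have "conj2 (minv2 ?M) g = conj2 (adj2 ?M) g"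
      unfolding minv2_adj using dpos by (intro conj2_smul) auto
    then show "conj2 (minv2 ?M) g \<in> Gamma0 N"
      unfolding adj using form_conj_Gamma0[OF NN hpos epos det' P g] by simp
  qed
qed



lemma sqf_coprime:
  fixes K v :: int
  assumes "squarefree K"
  shows "coprime (K div gcd v K) v"
proof -
  define g where "g = gcd v K"
  define d where "d = gcd (K div g) v"
  have gK: "K = g * (K div g)" unfolding g_def by simp
  have "d dvd v" "d dvd K div g" unfolding d_def by auto
  then have "d dvd K" using gK by (metis dvd_mult)
  then have "d dvd g" using \<open>d dvd v\<close> unfolding g_def by simp
  then have "d*d dvd g * (K div g)" using \<open>d dvd K div g\<close> by (rule mult_dvd_mono)
  then have "d^2 dvd K" using gK by (simp add: power2_eq_square)
  then have "is_unit d" using assms squarefreeD by blast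
  then show ?thesis unfolding d_def g_def by (simp add: coprime_iff_gcd_eq_1 is_unit_gcd)
qed

lemma trans_to_zero:
  fixes h K :: int and N :: nat
  assumes NN: "int N = h^2 * K" and hpos: "h > 0" and Kpos: "K > 0" and P: "Pmod h"
    and sqf: "squarefree K" and x: "x \<in> (\<rat>::real set)"
  shows "\<exists>M\<in>normalizer_Gamma0 N. lft_defined M x \<and> lft M x = 0"
proof -
  have "of_int h * x \<in> \<rat>" using x by simp
  then obtain u v where vpos: "v > 0" and cuv: "coprime u v" and hx: "of_int h * x = of_int u / of_int v"
    by (rule Rats_cases')
  define g where "g = gcd v K"
  define e where "e = K div g"
  define v' where "v' = v div g"
  have gpos: "g > 0" unfolding g_def using Kpos by simp
  have Keg: "K = e*g" unfolding e_def g_def by simp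
  have vgv: "v = g*v'" unfolding v'_def g_def by simp
  have epos: "e > 0" using Keg Kpos gpos by (simp add: zero_less_mult_iff)
  have "coprime e v" unfolding e_def g_def by (rule sqf_coprime[OF sqf])
  then have "coprime (e*u) v" using cuv by simp
  then obtain s t where st: "s*(e*u) + t*v = 1"
    using bezout_int[of "e*u" v] by (metis coprime_iff_gcd_eq_1)
  define \<alpha> where "\<alpha> = -s"
  define \<beta> where "\<beta> = -t"
  have det: "e*\<alpha>*(-u) - g*\<beta>*v' = 1" unfolding \<alpha>_def \<beta>_def using st vgv
    by (simp add: algebra_simps)
  have NN': "int N = h^2*e*g" using NN Keg by simp
  define M :: mat2 where "M = (of_int (h*e*\<alpha>), of_int \<beta>, of_int (int N*v'), of_int (h*e*(-u)))"
  have Mn: "M \<in> normalizer_Gamma0 N" unfolding M_def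
    by (rule form_normalizer[OF NN' hpos epos det P])
  have det1: "K*0*0 - 1*(-1)*1 = (1::int)" by simp
  have NN1: "int N = h^2*K*1" using NN by simp
  define F :: mat2 where "F = (of_int (h*K*0), of_int (-1), of_int (int N*1), of_int (h*K*0))"
  have Fn: "F \<in> normalizer_Gamma0 N" unfolding F_def
    by (rule form_normalizer[OF NN1 hpos Kpos det1 P])
  have PN: "mmul2 F M \<in> normalizer_Gamma0 N" by (rule normalizer_mult[OF Fn Mn])
  define A B C D where "A = real_of_int (h*e*\<alpha>)" "B = real_of_int \<beta>" "C = real_of_int (int N*v')"
    "D = real_of_int (h*e*(-u))"
  have MABCD: "M = (A,B,C,D)" unfolding M_def A_B_C_D_def by simp
  have dM: "A*D - B*C > 0" using Mn unfolding normalizer_Gamma0_def MABCD by simp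
  have hxv: "of_int h * x * of_int v = of_int u" using hx vpos by simp
  have CxD: "C*x + D = 0"
  proof -
    have "C*x + D = of_int h * of_int e * (of_int h * x * of_int v - of_int u)"
      unfolding A_B_C_D_def NN' vgv by (simp add: algebra_simps power2_eq_square)
    then show ?thesis using hxv by simp
  qed
  have AxB: "A*x + B \<noteq> 0"
  proof
    assume "A*x + B = 0"
    then have "B = -A*x" "D = -C*x" using CxD by auto
    then have "A*D - B*C = 0" by (simp add: algebra_simps)
    then show False using dM by simp
  qed
  have FMe: "mmul2 F M = (-C, -D, real N * A, real N * B)"
    unfolding F_def MABCD by simp
  have Npos: "real N \<noteq> 0" using NN hpos Kpos by (metis mult_pos_pos of_int_0_less_iff of_nat_0_less_iff zero_less_power less_irrefl)
  have "lft_defined (mmul2 F M) x \<and> lft (mmul2 F M) x = 0"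
  proof -
    have "real N * A * x + real N * B = real N * (A*x+B)" by (simp add: algebra_simps)
    moreover have "-C*x + -D = -(C*x+D)" by simp
    ultimately show ?thesis unfolding FMe using Npos AxB CxD by simp
  qed
  then show ?thesis using PN by blast
qed

lemma transitive:
  fixes h K :: int and N :: nat
  assumes NN: "int N = h^2 * K" and hpos: "h > 0" and Kpos: "K > 0" and P: "Pmod h"
    and sqf: "squarefree K"
  shows "\<forall>x\<in>(\<rat>::real set). \<forall>y\<in>(\<rat>::real set).
            \<exists>M\<in>normalizer_Gamma0 N. lft_defined M x \<and> lft M x = y"
proof (intro ballI)
  fix x y :: real assume x: "x \<in> \<rat>" and y: "y \<in> \<rat>"
  obtain P1 where P1: "P1 \<in> normalizer_Gamma0 N" "lft_defined P1 x" "lft P1 x = 0"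
    using trans_to_zero[OF NN hpos Kpos P sqf x] by blast
  obtain P2 where P2: "P2 \<in> normalizer_Gamma0 N" "lft_defined P2 y" "lft P2 y = 0"
    using trans_to_zero[OF NN hpos Kpos P sqf y] by blast
  have d2: "det2 P2 \<noteq> 0" using P2(1) unfolding normalizer_Gamma0_def by auto
  have i2: "lft_defined (minv2 P2) 0 \<and> lft (minv2 P2) 0 = y"
    using lft_minv2[OF d2 P2(2)] P2(3) by simp
  have "lft_defined (mmul2 (minv2 P2) P1) x \<and> lft (mmul2 (minv2 P2) P1) x = y"
    using lft_mmul2[of P1 x "minv2 P2"] P1 i2 by simp
  moreover have "mmul2 (minv2 P2) P1 \<in> normalizer_Gamma0 N"
    by (rule normalizer_mult[OF normalizer_inv[OF P2(1)] P1(1)])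
  ultimately show "\<exists>M\<in>normalizer_Gamma0 N. lft_defined M x \<and> lft M x = y" by blast
qed



lemma Pmod_gen:
  fixes m :: int
  assumes m: "m > 0"
  and fin: "\<And>r s. 0 \<le> r \<Longrightarrow> r < m \<Longrightarrow> 0 \<le> s \<Longrightarrow> s < m \<Longrightarrow> (r*s - 1) mod m = 0 \<Longrightarrow> (r - s) mod m = 0"
  shows "Pmod m"
  unfolding Pmod_def
proof (intro allI impI)
  fix x w :: int assume "m dvd x*w - 1"
  have "((x mod m)*(w mod m) - 1) mod m = (x*w - 1) mod m"
    by (metis mod_diff_left_eq mod_mult_eq)
  then have "((x mod m)*(w mod m) - 1) mod m = 0"
    using \<open>m dvd x*w - 1\<close> by (simp add: mod_eq_0_iff_dvd)
  then have "((x mod m) - (w mod m)) mod m = 0"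
    using fin m by simp
  then show "m dvd x - w" by (simp add: mod_diff_eq mod_eq_0_iff_dvd)
qed

lemma ivl8: "0 \<le> r \<Longrightarrow> r < (8::int) \<Longrightarrow> r \<in> {0,1,2,3,4,5,6,7}" by auto
lemma ivl4: "0 \<le> r \<Longrightarrow> r < (4::int) \<Longrightarrow> r \<in> {0,1,2,3}" by auto
lemma ivl3: "0 \<le> r \<Longrightarrow> r < (3::int) \<Longrightarrow> r \<in> {0,1,2}" by auto
lemma ivl2: "0 \<le> r \<Longrightarrow> r < (2::int) \<Longrightarrow> r \<in> {0,1}" by auto

lemma Pmod8: "Pmod 8"
  by (rule Pmod_gen) (auto dest!: ivl8)
lemma Pmod4: "Pmod 4"
  by (rule Pmod_gen) (auto dest!: ivl4)
lemma Pmod3: "Pmod 3"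
  by (rule Pmod_gen) (auto dest!: ivl3)
lemma Pmod2: "Pmod 2"
  by (rule Pmod_gen) (auto dest!: ivl2)
lemma Pmod1: "Pmod 1"
  unfolding Pmod_def by simp

lemma Pmod_mult: assumes "Pmod m" "Pmod n" "coprime m n" shows "Pmod (m*n)"
  using assms unfolding Pmod_def
  by (meson divides_mult dvd_mult_left dvd_mult_right)



lemma squarefree_int_nat: assumes "squarefree (n::nat)" shows "squarefree (int n)"
proof (rule squarefreeI)
  fix x :: int assume "x^2 dvd int n"
  then have "int (nat \<bar>x\<bar> ^ 2) dvd int n" by (simp add: power2_eq_square abs_mult[symmetric])
  then have "nat \<bar>x\<bar> ^ 2 dvd n" by (simp only: of_nat_dvd_iff)
  then have "nat \<bar>x\<bar> dvd 1" using assms squarefreeD by blast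
  then show "x dvd 1" by simp
qed

lemma sqf_pow_le1: assumes "prime (p::nat)" "k \<le> 1" shows "squarefree (p^k)"
  using assms by (cases k) (auto simp: squarefree_prime)

lemma Pmod_pow2: "i \<le> 3 \<Longrightarrow> Pmod (2^i)"
  using Pmod1 Pmod2 Pmod4 Pmod8 by (cases i; cases "i - 1"; cases "i - 2"; auto simp: numeral_eq_Suc)

lemma Pmod_pow3: "j \<le> 1 \<Longrightarrow> Pmod (3^j)"
  using Pmod1 Pmod3 by (cases j) auto

lemma suff_data:
  fixes N N' a b :: nat
  assumes "a < 8" "b < 4" "squarefree N'" "\<not> 2 dvd N'" "\<not> 3 dvd N'" "N = 2^a * 3^b * N'"
  shows "\<exists>h K :: int. int N = h^2 * K \<and> h > 0 \<and> K > 0 \<and> Pmod h \<and> squarefree K"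
proof -
  define h :: int where "h = 2^(a div 2) * 3^(b div 2)"
  define Kn :: nat where "Kn = 2^(a mod 2) * 3^(b mod 2) * N'"
  have N'pos: "N' > 0" using assms(3) by (metis not_gr0 not_squarefree_0)
  have "(2::nat)^a = (2^(a div 2))^2 * 2^(a mod 2)"
    by (metis div_mult_mod_eq power_add power_mult mult.commute)
  moreover have "(3::nat)^b = (3^(b div 2))^2 * 3^(b mod 2)"
    by (metis div_mult_mod_eq power_add power_mult mult.commute)
  ultimately have eq: "int N = h^2 * int Kn" unfolding h_def Kn_def assms(6)
    by (simp add: power_mult_distrib algebra_simps)
  have "Pmod h" unfolding h_def
    by (rule Pmod_mult[OF Pmod_pow2 Pmod_pow3]) (use assms in auto)
  have c1: "coprime (2^(a mod 2)) (3^(b mod 2) :: nat)" by simp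
  have c2n: "coprime 2 N'" using assms(4) by (simp add: prime_imp_coprime)
  have c3n: "coprime 3 N'" using assms(5) by (simp add: prime_imp_coprime)
  have c2: "coprime (2^(a mod 2) * 3^(b mod 2)) N'"
    using c2n c3n by (simp add: coprime_power_left_iff)
  have "squarefree (2^(a mod 2) * 3^(b mod 2) :: nat)"
    by (rule squarefree_mult_coprime[OF c1 sqf_pow_le1 sqf_pow_le1]) auto
  then have "squarefree Kn" unfolding Kn_def by (rule squarefree_mult_coprime[OF c2 _ assms(3)])
  then have "squarefree (int Kn)" by (rule squarefree_int_nat)
  moreover have "int Kn > 0" unfolding Kn_def using N'pos by simp
  moreover have "h > 0" unfolding h_def by simp
  ultimately show ?thesis using eq \<open>Pmod h\<close> by blast
qed



lemma Gamma0_entries: "G \<in> Gamma0 N \<Longrightarrow> \<exists>a b c d. G = (of_int a, of_int b, of_int (int N * c), of_int d)"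
  unfolding Gamma0_def by (auto elim!: dvdE)

lemma nec_core:
  fixes m x y z w :: int and N :: nat
  assumes M: "M \<in> normalizer_Gamma0 N" and def0: "lft_defined M 0" and val: "lft M 0 = 1 / of_int m"
    and mpos: "m > 0" and mN: "m^2 dvd int N" and g: "x*w - y*(int N*z) = 1" and nd: "\<not> m dvd x - w"
  shows False
proof -
  obtain A B C D where MD: "M = (A,B,C,D)" by (cases M)
  define \<Delta> where "\<Delta> = A*D - B*C"
  have Dpos: "\<Delta> > 0" using M unfolding normalizer_Gamma0_def MD \<Delta>_def by simp
  have incl: "\<And>G. G \<in> Gamma0 N \<Longrightarrow> conj2 M G \<in> Gamma0 N"
    using M unfolding normalizer_alt by blast
  have D0: "D \<noteq> 0" using def0 MD by simp
  have DmB: "D = of_int m * B" using val D0 mpos unfolding MD by (simp add: field_simps)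
  have T: "(1,1,0,1) \<in> Gamma0 N" unfolding Gamma0_def
    by (rule CollectI, rule exI[of _ 1], rule exI[of _ 1], rule exI[of _ 0], rule exI[of _ 1]) simp
  have L: "(1,0,real N,1) \<in> Gamma0 N" unfolding Gamma0_def
    by (rule CollectI, rule exI[of _ 1], rule exI[of _ 0], rule exI[of _ "int N"], rule exI[of _ 1]) simp
  have G: "(of_int x, of_int y, of_int (int N * z), of_int w) \<in> Gamma0 N" unfolding Gamma0_def
    by (rule CollectI, rule exI[of _ x], rule exI[of _ y], rule exI[of _ "int N * z"], rule exI[of _ w]) (simp add: g)
  obtain a1 t1 c1 d1 where e1: "conj2 M (1,1,0,1) = (of_int a1, of_int t1, of_int (int N * c1), of_int d1)"
    using Gamma0_entries[OF incl[OF T]] by blast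
  obtain a2 t2 c2 d2 where e2: "conj2 M (1,0,real N,1) = (of_int a2, of_int t2, of_int (int N * c2), of_int d2)"
    using Gamma0_entries[OF incl[OF L]] by blast
  obtain a3 t3 c3 d3 where e3: "conj2 M (of_int x, of_int y, of_int (int N * z), of_int w) = (of_int a3, of_int t3, of_int (int N * c3), of_int d3)"
    using Gamma0_entries[OF incl[OF G]] by blast
  have f1: "A*A/\<Delta> = of_int t1" and f5: "-(C*C)/\<Delta> = real N * of_int c1"
    using e1 unfolding MD conj2_explicit \<Delta>_def by simp_all
  have f2: "-(B*B*real N)/\<Delta> = of_int t2" and f6: "D*D*real N/\<Delta> = real N * of_int c2"
    using e2 unfolding MD conj2_explicit \<Delta>_def by (simp_all add: algebra_simps)
  have f3: "(-A*B*of_int x - B*B*(real N * of_int z) + A*A*of_int y + A*B*of_int w)/\<Delta> = of_int t3"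
    and f4: "(C*D*of_int x + D*D*(real N * of_int z) - C*C*of_int y - C*D*of_int w)/\<Delta> = real N * of_int c3"
    using e3 unfolding MD conj2_explicit \<Delta>_def by simp_all
  define q where "q = x - w"
  have n1: "of_int q * (A*B/\<Delta>) = of_int (y*t1 + z*t2 - t3)"
  proof -
    have "(-A*B*of_int x - B*B*(real N * of_int z) + A*A*of_int y + A*B*of_int w)/\<Delta>
        = - (of_int q * (A*B/\<Delta>)) + of_int z * (-(B*B*real N)/\<Delta>) + of_int y * (A*A/\<Delta>)"
      unfolding q_def using Dpos by (simp add: field_simps)
    then have "of_int t3 = - (of_int q * (A*B/\<Delta>)) + of_int z * of_int t2 + of_int y * of_int t1"
      unfolding f1 f2 f3 .
    then show ?thesis by simp
  qed
  have n2: "of_int q * (C*D/\<Delta>) = real N * of_int (c3 - z*c2 - y*c1)"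
  proof -
    have "(C*D*of_int x + D*D*(real N * of_int z) - C*C*of_int y - C*D*of_int w)/\<Delta>
        = of_int q * (C*D/\<Delta>) + of_int z * (D*D*real N/\<Delta>) + of_int y * (-(C*C)/\<Delta>)"
      unfolding q_def using Dpos by (simp add: field_simps)
    then have "real N * of_int c3 = of_int q * (C*D/\<Delta>) + of_int z * (real N * of_int c2) + of_int y * (real N * of_int c1)"
      unfolding f4 f5 f6 .
    then show ?thesis by (simp add: algebra_simps)
  qed
  have BC: "B*C = of_int m * (A*B) - \<Delta>" unfolding \<Delta>_def DmB by (simp add: algebra_simps)
  have "of_int q * (C*D/\<Delta>) = of_int m * of_int m * (of_int q * (A*B/\<Delta>)) - of_int q * of_int m"
  proof -
    have "of_int q * (C*D/\<Delta>) = of_int q * of_int m * (B*C/\<Delta>)" unfolding DmB by (simp add: algebra_simps)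
    also have "\<dots> = of_int q * of_int m * (of_int m * (A*B/\<Delta>) - 1)" unfolding BC using Dpos
      by (simp add: field_simps)
    finally show ?thesis by (simp add: algebra_simps)
  qed
  then have "real_of_int (int N * (c3 - z*c2 - y*c1)) = of_int (m*m*(y*t1 + z*t2 - t3) - q*m)"
    unfolding n1 n2 by simp
  then have eqi: "int N * (c3 - z*c2 - y*c1) = m*m*(y*t1 + z*t2 - t3) - q*m"
    by (simp only: of_int_eq_iff)
  have "m*m dvd int N * (c3 - z*c2 - y*c1)" using mN by (simp add: power2_eq_square)
  then have "m*m dvd m*m*(y*t1 + z*t2 - t3) - q*m" using eqi by simp
  moreover have "q*m = m*m*(y*t1 + z*t2 - t3) - (m*m*(y*t1 + z*t2 - t3) - q*m)" by simp
  ultimately have "m*m dvd q*m" by (metis dvd_diff dvd_triv_left)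
  then have "m dvd q" using mpos by simp
  then show False using nd q_def by simp
qed



lemma exists_g:
  fixes p m r :: int and N k :: nat
  assumes p: "prime p" and m: "m = p^k" and k: "k \<ge> 1" and mN: "m^2 dvd int N" and N: "N \<ge> 1"
    and r1: "\<not> p dvd 1 + r" and r2: "\<not> m dvd r*(2+r)"
  shows "\<exists>x w t. x*w - t*(int N*1) = 1 \<and> \<not> m dvd x - w"
proof -
  have Nnz: "int N \<noteq> 0" using N by simp
  have pnu: "\<not> is_unit p" using p not_prime_unit by blast
  obtain N1 where N1: "int N = p ^ multiplicity p (int N) * N1" "\<not> p dvd N1"
    using multiplicity_decompose'[OF Nnz pnu] by blast
  have "coprime p N1" using p N1(2) by (simp add: prime_imp_coprime)
  then have "coprime N1 m" unfolding m by (simp add: coprime_commute)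
  then obtain s s' where ss: "s*N1 + s'*m = 1"
    using bezout_int[of N1 m] by (metis coprime_iff_gcd_eq_1)
  define c where "c = N1*(s*r)"
  have "N1*s = 1 - s'*m" using ss by (simp add: algebra_simps)
  then have "c = (1 - s'*m)*r" unfolding c_def by (metis mult.assoc)
  then have c: "c = r + m*(-s'*r)" by (simp add: algebra_simps)
  define x where "x = 1 + c"
  have "p dvd m" unfolding m using k by (simp add: dvd_power)
  have cx1: "coprime x N1"
  proof (rule coprimeI)
    fix d assume "d dvd x" "d dvd N1"
    then have "d dvd c" unfolding c_def by simp
    then have "d dvd x - c" using \<open>d dvd x\<close> by (rule dvd_diff[rotated])
    then show "is_unit d" unfolding x_def by simp
  qed
  have "\<not> p dvd x"
  proof
    assume "p dvd x"
    moreover have "p dvd m*(-s'*r)" using \<open>p dvd m\<close> by simp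
    ultimately have "p dvd x - m*(-s'*r)" by (rule dvd_diff)
    then show False using r1 unfolding x_def c by (simp add: algebra_simps)
  qed
  then have "coprime p x" using p by (simp add: prime_imp_coprime)
  then have "coprime x (p ^ multiplicity p (int N))" by (simp add: coprime_commute)
  then have "coprime x (p ^ multiplicity p (int N) * N1)" using cx1 by simp
  then have "coprime x (int N)" using N1(1) by simp
  then obtain w t where wt: "w*x + t*int N = 1"
    using bezout_int[of x "int N"] by (metis coprime_iff_gcd_eq_1)
  have "\<not> m dvd x - w"
  proof
    assume "m dvd x - w"
    then have "m dvd x*(x-w)" by simp
    moreover have "m dvd m^2" by (simp add: power2_eq_square)
    then have "m dvd int N" using mN by (rule dvd_trans)
    then have "m dvd t*int N" by simp
    ultimately have "m dvd x*(x-w) - t*int N" by (rule dvd_diff)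
    moreover have "x*(x-w) - t*int N = r*(2+r) + m*((-s'*r)*(2 + 2*r) + m*(-s'*r)*(-s'*r))"
      using wt unfolding x_def c by (simp add: algebra_simps)
    ultimately have "m dvd r*(2+r) + m*((-s'*r)*(2 + 2*r) + m*(-s'*r)*(-s'*r))" by simp
    then have "m dvd r*(2+r)" by (simp add: dvd_add_left_iff)
    then show False using r2 by simp
  qed
  moreover have "x*w - (-t)*(int N*1) = 1" using wt by (simp add: algebra_simps)
  ultimately show ?thesis by blast
qed



lemma rhs_of:
  fixes N :: nat
  assumes N: "N \<ge> 1" and n2: "\<not> 2^8 dvd N" and n3: "\<not> 3^4 dvd N"
    and np: "\<And>p. prime p \<Longrightarrow> p \<ge> 5 \<Longrightarrow> \<not> p^2 dvd N"
  shows "\<exists>a b N'::nat. a < 8 \<and> b < 4 \<and> squarefree N' \<and> \<not> 2 dvd N' \<and> \<not> 3 dvd N'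
                  \<and> N = 2^a * 3^b * N'"
proof -
  have Nnz: "N \<noteq> 0" using N by simp
  obtain N2 where N2: "N = 2 ^ multiplicity 2 N * N2" "\<not> 2 dvd N2"
    using multiplicity_decompose'[OF Nnz, of 2] by auto
  have N2nz: "N2 \<noteq> 0" using N2(2) by (metis dvd_0_right)
  obtain N' where N': "N2 = 3 ^ multiplicity 3 N2 * N'" "\<not> 3 dvd N'"
    using multiplicity_decompose'[OF N2nz, of 3] by auto
  define a where "a = multiplicity 2 N"
  define b where "b = multiplicity 3 N2"
  have Neq: "N = 2^a * 3^b * N'" using N2 N' unfolding a_def b_def by (simp add: mult.assoc)
  have "a < 8"
  proof (rule ccontr)
    assume "\<not> a < 8"
    then have "(2::nat)^8 dvd 2^a" by (intro le_imp_power_dvd) simp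
    then show False using n2 Neq by (metis dvd_mult2 mult.assoc)
  qed
  have "b < 4"
  proof (rule ccontr)
    assume "\<not> b < 4"
    then have "(3::nat)^4 dvd 3^b" by (intro le_imp_power_dvd) simp
    then have "(3::nat)^4 dvd 3^b * (2^a * N')" by (rule dvd_mult2)
    then show False using n3 Neq by (metis mult.assoc mult.commute)
  qed
  have N'dvd: "N' dvd N" using Neq by simp
  have "\<not> 2 dvd N'" using N2(2) N'(1) by (metis dvd_mult)
  have sq: "squarefree N'"
  proof (rule squarefreeI)
    fix x :: nat assume x: "x^2 dvd N'"
    show "x dvd 1"
    proof (rule ccontr)
      assume "\<not> x dvd 1"
      then have "x \<noteq> 1" by auto
      then obtain p where p: "prime p" "p dvd x" using prime_factor_nat by blast
      have "p^2 dvd x^2" using p(2) by (rule dvd_power_same)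
      then have pN': "p^2 dvd N'" using x by (rule dvd_trans)
      then have "p dvd N'" by (metis dvd_power dvd_trans pos2 power2_eq_square dvd_triv_left)
      then have "p \<noteq> 2" "p \<noteq> 3" using \<open>\<not> 2 dvd N'\<close> N'(2) by auto
      moreover have "p \<ge> 2" using p(1) prime_ge_2_nat by blast
      moreover have "p \<noteq> 4"
      proof
        assume "p = 4"
        then have "prime ((2::nat)*2)" using p(1) by simp
        then show False using prime_product by fastforce
      qed
      ultimately have "p \<ge> 5" by linarith
      moreover have "p^2 dvd N" using pN' N'dvd by (rule dvd_trans)
      ultimately show False using np p(1) by blast
    qed
  qed
  show ?thesis using \<open>a < 8\<close> \<open>b < 4\<close> sq \<open>\<not> 2 dvd N'\<close> N'(2) Neq by blast
qed



lemma nec_final: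
  fixes P m r :: int and N k :: nat
  assumes T: "\<forall>x\<in>(\<rat>::real set). \<forall>y\<in>(\<rat>::real set).
            \<exists>M\<in>normalizer_Gamma0 N. lft_defined M x \<and> lft M x = y"
    and N: "N \<ge> 1" and p: "prime P" and m: "m = P^k" and k: "k \<ge> 1" and mN: "m^2 dvd int N"
    and r1: "\<not> P dvd 1 + r" and r2: "\<not> m dvd r*(2+r)"
  shows False
proof -
  obtain x w t where g: "x*w - t*(int N*1) = 1" and nd: "\<not> m dvd x - w"
    using exists_g[OF p m k mN N r1 r2] by blast
  have mpos: "m > 0" unfolding m using p by (simp add: prime_gt_0_int)
  have "1 / real_of_int m \<in> \<rat>" by simp
  then obtain M where M: "M \<in> normalizer_Gamma0 N" "lft_defined M 0" "lft M 0 = 1 / of_int m"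
    using T by (meson Rats_0)
  show False by (rule nec_core[OF M mpos mN g nd])
qed

theorem proposition1:
  fixes N :: nat
  assumes "N \<ge> 1"
  shows "(\<forall>x\<in>(\<rat>::real set). \<forall>y\<in>(\<rat>::real set).
            \<exists>M\<in>normalizer_Gamma0 N. lft_defined M x \<and> lft M x = y)
         \<longleftrightarrow> (\<exists>a b N'::nat. a < 8 \<and> b < 4 \<and> squarefree N' \<and> \<not> 2 dvd N' \<and> \<not> 3 dvd N'
                  \<and> N = 2^a * 3^b * N')"
proof
  assume T: "\<forall>x\<in>(\<rat>::real set). \<forall>y\<in>(\<rat>::real set).
            \<exists>M\<in>normalizer_Gamma0 N. lft_defined M x \<and> lft M x = y"
  show "\<exists>a b N'::nat. a < 8 \<and> b < 4 \<and> squarefree N' \<and> \<not> 2 dvd N' \<and> \<not> 3 dvd N'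
                  \<and> N = 2^a * 3^b * N'"
  proof (rule rhs_of[OF assms])
    show "\<not> 2^8 dvd N"
    proof
      assume "2^8 dvd N"
      then have "int (2^8) dvd int N" by (simp only: of_nat_dvd_iff)
      then have mN: "(2^4::int)^2 dvd int N" by simp
      have pr: "prime (2::int)" by simp
      show False by (rule nec_final[OF T assms pr refl _ mN, where r=2]) auto
    qed
    show "\<not> 3^4 dvd N"
    proof
      assume "3^4 dvd N"
      then have "int (3^4) dvd int N" by (simp only: of_nat_dvd_iff)
      then have mN: "(3^2::int)^2 dvd int N" by simp
      have pr: "prime (3::int)" by simp
      show False by (rule nec_final[OF T assms pr refl _ mN, where r=1]) auto
    qed
    fix p :: nat assume p: "prime p" "p \<ge> 5"
    show "\<not> p^2 dvd N"
    proof
      assume "p^2 dvd N"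
      then have "int (p^2) dvd int N" by (simp only: of_nat_dvd_iff)
      then have mN: "(int p^1)^2 dvd int N" by simp
      have pi: "prime (int p)" using p(1) by simp
      have r1: "\<not> int p dvd 1 + 1"
      proof
        assume "int p dvd 1 + 1"
        then have "int p \<le> 2" using zdvd_imp_le[of "int p" 2] by simp
        then show False using p(2) by simp
      qed
      have r2: "\<not> int p^1 dvd 1*(2+1)"
      proof
        assume "int p^1 dvd 1*(2+1)"
        then have "int p \<le> 3" using zdvd_imp_le[of "int p" 3] by simp
        then show False using p(2) by simp
      qed
      show False by (rule nec_final[OF T assms pi refl _ mN r1 r2]) simp
    qed
  qed
next
  assume "\<exists>a b N'::nat. a < 8 \<and> b < 4 \<and> squarefree N' \<and> \<not> 2 dvd N' \<and> \<not> 3 dvd N'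
                  \<and> N = 2^a * 3^b * N'"
  then obtain h K :: int where "int N = h^2 * K" "h > 0" "K > 0" "Pmod h" "squarefree K"
    using suff_data by blast
  then show "\<forall>x\<in>(\<rat>::real set). \<forall>y\<in>(\<rat>::real set).
            \<exists>M\<in>normalizer_Gamma0 N. lft_defined M x \<and> lft M x = y"
    by (rule transitive)
qed

end
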